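(* There is a randomized algorithm which, given a set $P$ of $n$ elements and access to a query oracle for a poset $(P,\succ)$ of width at most $w$, finds the set of minimal elements of $(P,\succ)$, and whose expected number of oracle queries is at most $$\frac{w+1}{2}\,n+\frac{w^2-w}{2}\,(\log n-\log w).$$
   Context: A poset $(P,\succ)$ consists of a set $P$ and an irreflexive, transitive relation $\succ$. Elements $a,b$ are incomparable if neither $a\succ b$ nor $b\succ a$; the width is the maximum size of a set of mutually incomparable elements. An element $a$ is minimal if there is no $b$ with $a\succ b$. A query oracle answers a query on $(x,y)$ by reporting whether $x\succ y$, $y\succ x$, or they are incomparable. Logarithms are base $2$. *)

theory Defs
  imports "HOL-Probability.Probability"
begin

datatype answer = Gt | Lt | Inc

definition query_answer :: "('a \<Rightarrow> 'a \<Rightarrow> bool) \<Rightarrow> 'a \<Rightarrow> 'a \<Rightarrow> answer" where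
  "query_answer gt x y = (if gt x y then Gt else if gt y x then Lt else Inc)"

(* Deterministic query algorithms (decision trees): either stop with an output
  set, or query a pair and continue depending on the answer. *)
datatype 'a qtree = Output "'a set" | Query 'a 'a "answer \<Rightarrow> 'a qtree"

primrec qresult :: "('a \<Rightarrow> 'a \<Rightarrow> bool) \<Rightarrow> 'a qtree \<Rightarrow> 'a set" where
  "qresult gt (Output S) = S"
| "qresult gt (Query x y k) = qresult gt (k (query_answer gt x y))"

primrec qcount :: "('a \<Rightarrow> 'a \<Rightarrow> bool) \<Rightarrow> 'a qtree \<Rightarrow> nat" where
  "qcount gt (Output S) = 0"
| "qcount gt (Query x y k) = Suc (qcount gt (k (query_answer gt x y)))"

type_synonym 'a rand_qalg = "'a qtree pmf"

definition poset_on :: "'a set \<Rightarrow> ('a \<Rightarrow> 'a \<Rightarrow> bool) \<Rightarrow> bool" where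
  "poset_on P gt \<longleftrightarrow> (\<forall>x\<in>P. \<not> gt x x) \<and>
     (\<forall>x\<in>P. \<forall>y\<in>P. \<forall>z\<in>P. gt x y \<longrightarrow> gt y z \<longrightarrow> gt x z)"

definition incomparable :: "('a \<Rightarrow> 'a \<Rightarrow> bool) \<Rightarrow> 'a \<Rightarrow> 'a \<Rightarrow> bool" where
  "incomparable gt a b \<longleftrightarrow> \<not> gt a b \<and> \<not> gt b a"

definition antichain_in :: "'a set \<Rightarrow> ('a \<Rightarrow> 'a \<Rightarrow> bool) \<Rightarrow> 'a set \<Rightarrow> bool" where
  "antichain_in P gt A \<longleftrightarrow> A \<subseteq> P \<and>
     (\<forall>a\<in>A. \<forall>b\<in>A. a \<noteq> b \<longrightarrow> incomparable gt a b)"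

definition width_le :: "'a set \<Rightarrow> ('a \<Rightarrow> 'a \<Rightarrow> bool) \<Rightarrow> nat \<Rightarrow> bool" where
  "width_le P gt w \<longleftrightarrow> (\<forall>A. antichain_in P gt A \<longrightarrow> finite A \<and> card A \<le> w)"

definition minimal_elements :: "'a set \<Rightarrow> ('a \<Rightarrow> 'a \<Rightarrow> bool) \<Rightarrow> 'a set" where
  "minimal_elements P gt = {a \<in> P. \<not> (\<exists>b\<in>P. gt a b)}"

end

theory Submission
  imports Defs
begin

primrec scan :: "'a \<Rightarrow> 'a set \<Rightarrow> 'a list \<Rightarrow> 'a set \<Rightarrow> 'a qtree" where
  "scan x M [] K = Output (insert x K)"
| "scan x M (m#ms) K = Query x m (\<lambda>a. case a of Gt \<Rightarrow> Output M | Lt \<Rightarrow> scan x M ms K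
                                     | Inc \<Rightarrow> scan x M ms (insert m K))"

primrec graft :: "'a qtree \<Rightarrow> ('a set \<Rightarrow> 'a qtree) \<Rightarrow> 'a qtree" where
  "graft (Output S) k = k S"
| "graft (Query x y f) k = Query x y (\<lambda>a. graft (f a) k)"

definition lst :: "'a set \<Rightarrow> 'a list" where
  "lst M = (SOME xs. set xs = M \<and> distinct xs)"

definition ins :: "bool \<Rightarrow> 'a \<Rightarrow> 'a set \<Rightarrow> 'a qtree" where
  "ins d x M = scan x M (if d then lst M else rev (lst M)) {}"

primrec alg :: "nat \<Rightarrow> 'a set \<Rightarrow> 'a qtree pmf" where
  "alg 0 S = return_pmf (Output {})"
| "alg (Suc k) S = pmf_of_set S \<bind> (\<lambda>x. alg k (S - {x}) \<bind> (\<lambda>t.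
      pmf_of_set {True, False} \<bind> (\<lambda>d. return_pmf (graft t (ins d x)))))"

lemma graft_res: "qresult gt (graft t k) = qresult gt (k (qresult gt t))"
  by (induction t) auto

lemma graft_cnt: "qcount gt (graft t k) = qcount gt t + qcount gt (k (qresult gt t))"
  by (induction t) auto

lemma lst: "finite M \<Longrightarrow> set (lst M) = M \<and> distinct (lst M)"
  unfolding lst_def by (rule someI_ex) (use finite_distinct_list in blast)

lemma scan_res: "qresult gt (scan x M ms K) =
  (if \<exists>m\<in>set ms. gt x m then M else insert x (K \<union> {m\<in>set ms. \<not> gt m x}))"
  by (induction ms arbitrary: K) (auto simp: query_answer_def)

lemma scan_cnt_le: "qcount gt (scan x M ms K) \<le> length ms"
  by (induction ms arbitrary: K) (auto simp: query_answer_def split: answer.split)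

lemma scan_cnt_hit: "i < length ms \<Longrightarrow> gt x (ms ! i) \<Longrightarrow> qcount gt (scan x M ms K) \<le> Suc i"
proof (induction ms arbitrary: K i)
  case Nil then show ?case by simp
next
  case (Cons m ms)
  show ?case
  proof (cases i)
    case 0 then show ?thesis using Cons.prems by (simp add: query_answer_def)
  next
    case (Suc j)
    then show ?thesis using Cons.prems Cons.IH[of j]
      by (auto simp: query_answer_def split: answer.split)
  qed
qed

lemma ins_res: "finite M \<Longrightarrow> qresult gt (ins d x M) =
  (if \<exists>m\<in>M. gt x m then M else insert x {m\<in>M. \<not> gt m x})"
  using lst[of M] by (auto simp: ins_def scan_res)

lemma ins_cnt_le: "finite M \<Longrightarrow> qcount gt (ins d x M) \<le> card M"
  using lst[of M] scan_cnt_le[of gt x M "rev (lst M)" "{}"] scan_cnt_le[of gt x M "lst M" "{}"]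
    distinct_card[of "lst M"]
  by (auto simp: ins_def)

lemma ins_cnt_hit: assumes "finite M" "m \<in> M" "gt x m"
  shows "qcount gt (ins True x M) + qcount gt (ins False x M) \<le> card M + 1"
proof -
  let ?l = "lst M"
  have l: "set ?l = M" "distinct ?l" using lst[OF assms(1)] by auto
  have len: "length ?l = card M" using l distinct_card by metis
  obtain i where i: "i < length ?l" "?l ! i = m" using l assms(2) by (metis in_set_conv_nth)
  have a: "qcount gt (ins True x M) \<le> Suc i"
    unfolding ins_def using scan_cnt_hit[of i ?l gt x M "{}"] i assms by simp
  have r: "rev ?l ! (length ?l - Suc i) = m" using i by (simp add: rev_nth)
  have b: "qcount gt (ins False x M) \<le> Suc (length ?l - Suc i)"
    unfolding ins_def using scan_cnt_hit[of "length ?l - Suc i" "rev ?l" gt x M "{}"] i r assms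
    by simp
  show ?thesis using a b i len by linarith
qed

lemma exists_min:
  assumes po: "poset_on P gt" and SP: "S \<subseteq> P" and fin: "finite S" and y: "y \<in> S"
  shows "\<exists>m\<in>minimal_elements S gt. m = y \<or> gt y m"
  using y
proof (induction "card {z\<in>S. gt y z}" arbitrary: y rule: less_induct)
  case less
  show ?case
  proof (cases "\<exists>z\<in>S. gt y z")
    case False then show ?thesis using less.prems by (auto simp: minimal_elements_def)
  next
    case True
    then obtain z where z: "z \<in> S" "gt y z" by blast
    have sub: "{z'\<in>S. gt z z'} \<subset> {z'\<in>S. gt y z'}"
    proof
      show "{z'\<in>S. gt z z'} \<subseteq> {z'\<in>S. gt y z'}"
        using po SP z less.prems unfolding poset_on_def by blast
      have "\<not> gt z z" using po SP z unfolding poset_on_def by blast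
      then show "{z'\<in>S. gt z z'} \<noteq> {z'\<in>S. gt y z'}" using z by blast
    qed
    have "card {z'\<in>S. gt z z'} < card {z'\<in>S. gt y z'}"
      by (rule psubset_card_mono) (use fin sub in auto)
    from less.hyps[OF this z(1)] obtain m where
      m: "m \<in> minimal_elements S gt" "m = z \<or> gt z m" by blast
    have "gt y m" using m z po SP less.prems unfolding poset_on_def minimal_elements_def by blast
    then show ?thesis using m by blast
  qed
qed

lemma nonmin_hit:
  assumes po: "poset_on P gt" and SP: "S \<subseteq> P" and fin: "finite S" and x: "x \<in> S"
    and nm: "x \<notin> minimal_elements S gt"
  shows "\<exists>m\<in>minimal_elements (S - {x}) gt. gt x m"
proof -
  obtain y where y: "y \<in> S" "gt x y" using nm x unfolding minimal_elements_def by blast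
  have "y \<noteq> x" using po SP x y unfolding poset_on_def by blast
  then have y': "y \<in> S - {x}" using y by blast
  obtain m where m: "m \<in> minimal_elements (S - {x}) gt" "m = y \<or> gt y m"
    using exists_min[OF po _ _ y'] SP fin by blast
  have "m \<in> S" using m(1) unfolding minimal_elements_def by blast
  then have "gt x m" using m y po SP x unfolding poset_on_def by blast
  then show ?thesis using m by blast
qed

lemma ins_correct:
  assumes po: "poset_on P gt" and SP: "S \<subseteq> P" and fin: "finite S" and x: "x \<in> S"
  shows "qresult gt (ins d x (minimal_elements (S - {x}) gt)) = minimal_elements S gt"
proof -
  let ?M = "minimal_elements (S - {x}) gt"
  have finM: "finite ?M" using fin unfolding minimal_elements_def by auto
  have irr: "\<And>a. a \<in> S \<Longrightarrow> \<not> gt a a" using po SP unfolding poset_on_def by blast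
  have tr: "\<And>a b c. a \<in> S \<Longrightarrow> b \<in> S \<Longrightarrow> c \<in> S \<Longrightarrow> gt a b \<Longrightarrow> gt b c \<Longrightarrow> gt a c"
    using po SP unfolding poset_on_def by blast
  show ?thesis
  proof (cases "\<exists>m\<in>?M. gt x m")
    case True
    then obtain m0 where m0: "m0 \<in> ?M" "gt x m0" by blast
    have "?M = minimal_elements S gt"
    proof (intro set_eqI iffI)
      fix m assume m: "m \<in> ?M"
      have "\<not> gt m x"
      proof
        assume "gt m x"
        then have "gt m m0" using tr m m0 x unfolding minimal_elements_def by blast
        then show False using m m0 irr unfolding minimal_elements_def by blast
      qed
      then show "m \<in> minimal_elements S gt" using m unfolding minimal_elements_def by blast
    next
      fix m assume m: "m \<in> minimal_elements S gt"
      then have "m \<noteq> x" using m0 unfolding minimal_elements_def minimal_elements_def by blast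
      then show "m \<in> ?M" using m unfolding minimal_elements_def by blast
    qed
    then show ?thesis using True finM by (simp add: ins_res)
  next
    case False
    then have xmin: "x \<in> minimal_elements S gt" using nonmin_hit[OF po SP fin x] by blast
    have "insert x {m\<in>?M. \<not> gt m x} = minimal_elements S gt"
    proof (intro set_eqI iffI)
      fix m assume "m \<in> insert x {m\<in>?M. \<not> gt m x}"
      then show "m \<in> minimal_elements S gt" using xmin unfolding minimal_elements_def by blast
    next
      fix m assume m: "m \<in> minimal_elements S gt"
      show "m \<in> insert x {m\<in>?M. \<not> gt m x}"
        using m x unfolding minimal_elements_def by blast
    qed
    then show ?thesis using False finM by (simp add: ins_res)
  qed
qed

lemma min_card:
  assumes "width_le P gt w" "S \<subseteq> P"
  shows "card (minimal_elements S gt) \<le> w"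
proof -
  have "antichain_in P gt (minimal_elements S gt)"
    using assms(2) unfolding antichain_in_def incomparable_def minimal_elements_def by blast
  then show ?thesis using assms(1) unfolding width_le_def by blast
qed


lemma alg_res:
  assumes po: "poset_on P gt"
  shows "S \<subseteq> P \<Longrightarrow> finite S \<Longrightarrow> card S = k \<Longrightarrow> t \<in> set_pmf (alg k S) \<Longrightarrow>
    qresult gt t = minimal_elements S gt"
proof (induction k arbitrary: S t)
  case 0
  then show ?case by (simp add: minimal_elements_def)
next
  case (Suc k)
  then have ne: "S \<noteq> {}" by auto
  from Suc.prems(4) ne Suc.prems(2) obtain x t' d where
    x: "x \<in> S" and t': "t' \<in> set_pmf (alg k (S - {x}))" and t: "t = graft t' (ins d x)"
    by (auto simp: set_bind_pmf)
  have "qresult gt t' = minimal_elements (S - {x}) gt"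
    using Suc.IH[of "S - {x}" t'] Suc.prems x t' by auto
  then show ?case using t ins_correct[OF po Suc.prems(1,2) x] by (simp add: graft_res)
qed

definition gg :: "nat \<Rightarrow> nat \<Rightarrow> real" where
  "gg w i = (if i \<le> w then real i - 1 else (real w + 1) / 2 + real w * (real w - 1) / (2 * real i))"

definition BB :: "nat \<Rightarrow> nat \<Rightarrow> real" where
  "BB w k = (\<Sum>i\<in>{1..k}. gg w i)"

lemma BB_Suc: "BB w (Suc k) = BB w k + gg w (Suc k)"
  unfolding BB_def by simp

lemma gg_nonneg: "i \<ge> 1 \<Longrightarrow> 0 \<le> gg w i"
proof -
  assume "i \<ge> 1"
  moreover have "0 \<le> real w * (real w - 1)" by (cases w) auto
  ultimately show ?thesis unfolding gg_def by auto
qed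

lemma BB_nonneg: "0 \<le> BB w k"
  unfolding BB_def using gg_nonneg by (intro sum_nonneg) auto

lemma sum_bound:
  fixes c :: "'a \<Rightarrow> real"
  assumes fin: "finite S" and Mn: "Mn \<subseteq> S" "card Mn \<le> w" and cS: "card S = i"
    and c1: "\<And>x. x \<in> S \<Longrightarrow> c x \<le> real i - 1"
    and c2: "\<And>x. x \<in> S \<Longrightarrow> c x \<le> real w"
    and c3: "\<And>x. x \<in> S - Mn \<Longrightarrow> c x \<le> (real w + 1) / 2"
    and i1: "i \<ge> 1"
  shows "sum c S \<le> real i * gg w i"
proof (cases "i \<le> w")
  case True
  have "sum c S \<le> real (card S) * (real i - 1)" using c1 by (intro sum_bounded_above) auto
  then show ?thesis using True cS by (simp add: gg_def)
next
  case False
  have e: "sum c S = sum c (S - Mn) + sum c Mn" using sum.subset_diff[OF Mn(1) fin] .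
  have a: "sum c (S - Mn) \<le> real (card (S - Mn)) * ((real w + 1) / 2)"
    using c3 by (intro sum_bounded_above) auto
  have b: "sum c Mn \<le> real (card Mn) * real w"
    using c2 Mn(1) by (intro sum_bounded_above) auto
  have cd: "card (S - Mn) = i - card Mn" using card_Diff_subset[OF finite_subset[OF Mn(1) fin] Mn(1)] cS by simp
  have km: "card Mn \<le> i" using Mn cS card_mono[OF fin] by blast
  define k0 where "k0 = real (card Mn)"
  have k0w: "k0 \<le> real w" using Mn(2) k0_def by simp
  have cd': "real (card (S - Mn)) = real i - k0" using cd km k0_def by simp
  have "k0 * ((real w - 1)/2) \<le> real w * ((real w - 1) / 2)"
  proof (cases "w = 0")
    case True then show ?thesis using k0w k0_def by simp
  next
    case False then show ?thesis using k0w by (intro mult_right_mono) auto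
  qed
  moreover have "(real i - k0) * ((real w + 1) / 2) + k0 * real w =
     real i * ((real w + 1) / 2) + k0 * ((real w - 1)/2)" by (simp add: field_simps)
  moreover have "real (card Mn) * real w = k0 * real w" using k0_def by simp
  moreover have "real (card (S - Mn)) * ((real w + 1) / 2) = (real i - k0) * ((real w + 1) / 2)"
    using cd' by simp
  ultimately have "sum c S \<le> real i * ((real w + 1) / 2) + real w * ((real w - 1) / 2)"
    using e a b cd' by linarith
  also have "\<dots> = real i * gg w i" using False i1 by (simp add: gg_def field_simps)
  finally show ?thesis .
qed

lemma BB_small: "m \<le> w \<Longrightarrow> BB w m = real m * (real m - 1) / 2"
proof (induction m)
  case 0 then show ?case by (simp add: BB_def)
next
  case (Suc m) then show ?case by (simp add: BB_Suc gg_def field_simps)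
qed

lemma inv_le_ln: "n \<ge> 1 \<Longrightarrow> 1 / (real n + 1) \<le> ln (real n + 1) - ln (real n)"
proof -
  assume n: "n \<ge> 1"
  have "ln (real n / (real n + 1)) \<le> real n / (real n + 1) - 1"
    using n by (intro ln_le_minus_one) auto
  also have "\<dots> = - (1 / (real n + 1))" by (simp add: field_simps)
  finally show ?thesis using n by (simp add: ln_div)
qed

lemma BB_large: assumes "w \<ge> 1" "w \<le> n" shows
  "BB w n \<le> (real w + 1) / 2 * real n - real w + real w * (real w - 1) / 2 * (ln (real n) - ln (real w))"
  using assms(2)
proof (induction n rule: dec_induct)
  case base
  then show ?case using BB_small[of w w] by (simp add: field_simps)
next
  case (step n)
  have n1: "n \<ge> 1" using step assms by simp
  define c where "c = real w * (real w - 1) / 2"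
  have c0: "0 \<le> c" unfolding c_def using assms by auto
  have "c * (1 / (real n + 1)) \<le> c * (ln (real n + 1) - ln (real n))"
    using inv_le_ln[OF n1] c0 by (intro mult_left_mono) auto
  then have A: "c * (1 / (real n + 1)) \<le> c * ln (real n + 1) - c * ln (real n)"
    by (simp add: right_diff_distrib)
  have G: "gg w (Suc n) = (real w + 1) / 2 + c * (1 / (real n + 1))"
    using step unfolding c_def by (simp add: gg_def field_simps)
  have IH: "BB w n \<le> (real w + 1) / 2 * real n - real w + (c * ln (real n) - c * ln (real w))"
    using step.IH unfolding c_def by (simp add: right_diff_distrib)
  have D: "(real w + 1) / 2 * (real n + 1) = (real w + 1) / 2 * real n + (real w + 1) / 2"
    by (simp add: distrib_left)
  have "BB w (Suc n) \<le> (real w + 1) / 2 * (real n + 1) - real w + (c * ln (real n + 1) - c * ln (real w))"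
    unfolding BB_Suc using A G IH D by linarith
  then show ?case unfolding c_def by (simp add: right_diff_distrib add.commute)
qed


lemma coin_int: "(\<integral>\<^sup>+d. f d \<partial>measure_pmf (pmf_of_set {True, False})) = (f True + f False) / 2"
  by (simp add: nn_integral_pmf_of_set)

lemma alg_cnt:
  assumes po: "poset_on P gt" and wd: "width_le P gt w"
  shows "S \<subseteq> P \<Longrightarrow> finite S \<Longrightarrow> card S = k \<Longrightarrow>
    (\<integral>\<^sup>+t. ennreal (real (qcount gt t)) \<partial>measure_pmf (alg k S)) \<le> ennreal (BB w k)"
proof (induction k arbitrary: S)
  case 0
  then show ?case by (simp add: BB_def)
next
  case (Suc k)
  then have ne: "S \<noteq> {}" and fin: "finite S" and SP: "S \<subseteq> P" by auto
  define Mx where "Mx x = minimal_elements (S - {x}) gt" for x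
  define c where "c x = (real (qcount gt (ins True x (Mx x))) + real (qcount gt (ins False x (Mx x)))) / 2" for x
  have finMx: "finite (Mx x)" for x using fin unfolding Mx_def minimal_elements_def by auto
  have c0: "0 \<le> c x" for x unfolding c_def by simp
  have inner: "(\<integral>\<^sup>+t'. (\<integral>\<^sup>+d. ennreal (real (qcount gt (graft t' (ins d x))))
        \<partial>measure_pmf (pmf_of_set {True, False})) \<partial>measure_pmf (alg k (S - {x})))
      \<le> ennreal (BB w k + c x)" if x: "x \<in> S" for x
  proof -
    have IH: "(\<integral>\<^sup>+t. ennreal (real (qcount gt t)) \<partial>measure_pmf (alg k (S - {x}))) \<le> ennreal (BB w k)"
      using Suc.IH[of "S - {x}"] Suc.prems x by auto
    have eq: "(\<integral>\<^sup>+d. ennreal (real (qcount gt (graft t' (ins d x))))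
        \<partial>measure_pmf (pmf_of_set {True, False})) = ennreal (real (qcount gt t')) + ennreal (c x)"
      if t': "t' \<in> set_pmf (alg k (S - {x}))" for t'
    proof -
      have r: "qresult gt t' = Mx x" unfolding Mx_def
        using alg_res[OF po, of "S - {x}" k t'] Suc.prems x t' by auto
      have "(\<integral>\<^sup>+d. ennreal (real (qcount gt (graft t' (ins d x))))
          \<partial>measure_pmf (pmf_of_set {True, False}))
        = (ennreal (real (qcount gt t') + real (qcount gt (ins True x (Mx x)))) +
           ennreal (real (qcount gt t') + real (qcount gt (ins False x (Mx x))))) / 2"
        by (simp add: coin_int graft_cnt r)
      also have "\<dots> = ennreal ((real (qcount gt t') + real (qcount gt (ins True x (Mx x))) +
           (real (qcount gt t') + real (qcount gt (ins False x (Mx x))))) / 2)"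
        by (subst ennreal_plus[symmetric]) (auto simp: divide_ennreal[symmetric])
      also have "\<dots> = ennreal (real (qcount gt t') + c x)"
        unfolding c_def by (simp add: field_simps)
      also have "\<dots> = ennreal (real (qcount gt t')) + ennreal (c x)"
        using c0 by (simp add: ennreal_plus)
      finally show ?thesis .
    qed
    have "(\<integral>\<^sup>+t'. (\<integral>\<^sup>+d. ennreal (real (qcount gt (graft t' (ins d x))))
        \<partial>measure_pmf (pmf_of_set {True, False})) \<partial>measure_pmf (alg k (S - {x})))
      = (\<integral>\<^sup>+t'. ennreal (real (qcount gt t')) + ennreal (c x) \<partial>measure_pmf (alg k (S - {x})))"
      by (intro nn_integral_cong_AE) (auto simp: AE_measure_pmf_iff eq)
    also have "\<dots> = (\<integral>\<^sup>+t'. ennreal (real (qcount gt t')) \<partial>measure_pmf (alg k (S - {x}))) + ennreal (c x)"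
      by (subst nn_integral_add) (auto simp: measure_pmf.emeasure_space_1)
    also have "\<dots> \<le> ennreal (BB w k) + ennreal (c x)"
      using IH by (intro add_right_mono)
    also have "\<dots> = ennreal (BB w k + c x)" using c0 BB_nonneg by (simp add: ennreal_plus)
    finally show ?thesis .
  qed
  have sumc: "sum c S \<le> real (Suc k) * gg w (Suc k)"
  proof (rule sum_bound[OF fin _ _ Suc.prems(3)])
    show "minimal_elements S gt \<subseteq> S" unfolding minimal_elements_def by auto
    show "card (minimal_elements S gt) \<le> w" using min_card[OF wd SP] .
    show "Suc k \<ge> 1" by simp
  next
    fix x assume x: "x \<in> S"
    have cMk: "card (Mx x) \<le> k"
    proof -
      have "Mx x \<subseteq> S - {x}" unfolding Mx_def minimal_elements_def by auto
      then have "card (Mx x) \<le> card (S - {x})" using fin by (intro card_mono) auto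
      then show ?thesis using Suc.prems x by simp
    qed
    have cMw: "card (Mx x) \<le> w" unfolding Mx_def using min_card[OF wd] SP by blast
    have b: "c x \<le> real (card (Mx x))"
    proof -
      have "qcount gt (ins True x (Mx x)) \<le> card (Mx x)" "qcount gt (ins False x (Mx x)) \<le> card (Mx x)"
        using ins_cnt_le[OF finMx[of x]] by auto
      then have "real (qcount gt (ins True x (Mx x))) \<le> real (card (Mx x))"
        "real (qcount gt (ins False x (Mx x))) \<le> real (card (Mx x))" by simp_all
      then show ?thesis unfolding c_def by (simp add: field_simps)
    qed
    show "c x \<le> real (Suc k) - 1" using b cMk by simp
    show "c x \<le> real w" using b cMw by simp
  next
    fix x assume x: "x \<in> S - minimal_elements S gt"
    then obtain m where m: "m \<in> Mx x" "gt x m"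
      using nonmin_hit[OF po SP fin] unfolding Mx_def by blast
    have cMw: "card (Mx x) \<le> w" unfolding Mx_def using min_card[OF wd] SP by blast
    have "qcount gt (ins True x (Mx x)) + qcount gt (ins False x (Mx x)) \<le> card (Mx x) + 1"
      using ins_cnt_hit[of "Mx x" m gt x, OF finMx[of x] m] .
    then have "real (qcount gt (ins True x (Mx x))) + real (qcount gt (ins False x (Mx x))) \<le> real (card (Mx x)) + 1"
      by (metis of_nat_1 of_nat_add of_nat_mono)
    moreover have "real (card (Mx x)) \<le> real w" using cMw by simp
    ultimately show "c x \<le> (real w + 1) / 2" using cMw unfolding c_def by (simp add: field_simps)
  qed
  have "(\<integral>\<^sup>+t. ennreal (real (qcount gt t)) \<partial>measure_pmf (alg (Suc k) S))
     = (\<integral>\<^sup>+x. (\<integral>\<^sup>+t'. (\<integral>\<^sup>+d. ennreal (real (qcount gt (graft t' (ins d x))))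
        \<partial>measure_pmf (pmf_of_set {True, False})) \<partial>measure_pmf (alg k (S - {x}))) \<partial>measure_pmf (pmf_of_set S))"
    by simp
  also have "\<dots> = (\<Sum>x\<in>S. (\<integral>\<^sup>+t'. (\<integral>\<^sup>+d. ennreal (real (qcount gt (graft t' (ins d x))))
        \<partial>measure_pmf (pmf_of_set {True, False})) \<partial>measure_pmf (alg k (S - {x})))) / of_nat (card S)"
    using ne fin by (simp add: nn_integral_pmf_of_set)
  also have "\<dots> \<le> (\<Sum>x\<in>S. ennreal (BB w k + c x)) / of_nat (card S)"
    by (intro divide_right_mono_ennreal sum_mono inner)
  also have "\<dots> = ennreal (\<Sum>x\<in>S. (BB w k + c x)) / ennreal (real (card S))"
  proof -
    have nn: "0 \<le> BB w k + c x" for x using c0[of x] BB_nonneg[of w k] by linarith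
    show ?thesis using nn by (simp add: ennreal_of_nat_eq_real_of_nat)
  qed
  also have "\<dots> = ennreal ((\<Sum>x\<in>S. (BB w k + c x)) / real (card S))"
  proof (rule divide_ennreal)
    show "0 \<le> (\<Sum>x\<in>S. (BB w k + c x))" using c0 BB_nonneg by (intro sum_nonneg add_nonneg_nonneg)
    show "0 < real (card S)" using ne fin by (simp add: card_gt_0_iff)
  qed
  also have "\<dots> \<le> ennreal (BB w (Suc k))"
  proof (rule ennreal_leI)
    have "(\<Sum>x\<in>S. (BB w k + c x)) = real (Suc k) * BB w k + sum c S"
      using Suc.prems by (simp add: sum.distrib)
    also have "\<dots> \<le> real (Suc k) * BB w k + real (Suc k) * gg w (Suc k)" using sumc by simp
    finally show "(\<Sum>x\<in>S. (BB w k + c x)) / real (card S) \<le> BB w (Suc k)"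
      using Suc.prems by (simp add: BB_Suc divide_le_eq field_simps)
  qed
  finally show ?case .
qed


lemma final_bound:
  assumes "1 \<le> w" "w \<le> n"
  shows "BB w n \<le> (real w + 1) / 2 * real n
             + (real w ^ 2 - real w) / 2 * (log 2 (real n) - log 2 (real w))"
proof -
  define L where "L = ln (real n) - ln (real w)"
  have L0: "0 \<le> L" unfolding L_def using assms by simp
  have l2: "0 < ln (2::real)" "ln (2::real) \<le> 1" using ln_le_minus_one[of 2] by auto
  have "L \<le> L / ln 2" using L0 l2 by (simp add: le_divide_eq mult_left_le)
  also have "L / ln 2 = log 2 (real n) - log 2 (real w)" unfolding L_def log_def
    by (simp add: diff_divide_distrib)
  finally have LL: "L \<le> log 2 (real n) - log 2 (real w)" .
  have c0: "0 \<le> real w * (real w - 1) / 2" using assms by simp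
  have "real w * (real w - 1) / 2 * L \<le> real w * (real w - 1) / 2 * (log 2 (real n) - log 2 (real w))"
    using LL c0 by (intro mult_left_mono)
  moreover have eq: "(real w ^ 2 - real w) / 2 = real w * (real w - 1) / 2" by (simp add: power2_eq_square algebra_simps)
  moreover have "BB w n \<le> (real w + 1) / 2 * real n - real w + real w * (real w - 1) / 2 * L"
    using BB_large[OF assms] unfolding L_def .
  moreover have "(0::real) \<le> real w" by simp
  ultimately show ?thesis unfolding eq by linarith
qed

theorem theorem8:
  fixes P :: "'a set" and w :: nat
  assumes "finite P" and "1 \<le> w" and "w \<le> card P"
  shows "\<exists>A :: 'a rand_qalg.
    \<forall>gt. poset_on P gt \<and> width_le P gt w \<longrightarrow>
      (\<forall>t\<in>set_pmf A. qresult gt t = minimal_elements P gt) \<and>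
      (\<integral>\<^sup>+ t. ennreal (real (qcount gt t)) \<partial>(measure_pmf A))
        \<le> ennreal ((real w + 1) / 2 * real (card P)
             + (real w ^ 2 - real w) / 2 * (log 2 (real (card P)) - log 2 (real w)))"
proof (intro exI allI impI conjI)
  fix gt assume h: "poset_on P gt \<and> width_le P gt w"
  show "\<forall>t\<in>set_pmf (alg (card P) P). qresult gt t = minimal_elements P gt"
    using alg_res[of P gt P "card P"] h assms by auto
  have "(\<integral>\<^sup>+ t. ennreal (real (qcount gt t)) \<partial>(measure_pmf (alg (card P) P))) \<le> ennreal (BB w (card P))"
    using alg_cnt[of P gt w P "card P"] h assms by auto
  also have "\<dots> \<le> ennreal ((real w + 1) / 2 * real (card P)
             + (real w ^ 2 - real w) / 2 * (log 2 (real (card P)) - log 2 (real w)))"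
    using final_bound[OF assms(2,3)] by (rule ennreal_leI)
  finally show "(\<integral>\<^sup>+ t. ennreal (real (qcount gt t)) \<partial>(measure_pmf (alg (card P) P))) \<le> ennreal ((real w + 1) / 2 * real (card P)
             + (real w ^ 2 - real w) / 2 * (log 2 (real (card P)) - log 2 (real w)))" .
qed

end
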